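(* Suppose the polytope $P_o=\mathrm{conv}\{v_1,\dots,v_{d+1}\}\subseteq\mathbb{R}^d$ contains the Euclidean ball $B_{4d^8}(0)$. Then there exist $d+1$ integer points $g_1,\dots,g_{d+1}\in\mathbb{Z}^d\cap\frac{2}{d^2}P_o$ (where $\frac{2}{d^2}P_o=\{\frac{2}{d^2}p:p\in P_o\}$) such that: (1) if $(\lambda_1,\dots,\lambda_{d+1})\in\Delta^{d+1}$ satisfies $\sum_i\lambda_i v_i=0$, then there exists $(\lambda_1',\dots,\lambda_{d+1}')\in\Delta^{d+1}$ with $\sum_i\lambda_i' g_i=0$ and $\frac12\lambda_i'\le\lambda_i\le2\lambda_i'$ for all $i$; (2) for every $i\in[d+1]$ there exists $(\lambda^i_1,\dots,\lambda^i_{d+1})\in\Delta^{d+1}$ with $\lambda^i_i\ge\frac{1}{2d^2}$ and $$g_i=\lambda^i_i v_i+\sum_{j\ne i}\lambda^i_j g_j.$$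
   Context: $\Delta^{m}$ denotes the probability simplex $\{\lambda\in\mathbb{R}^m_{\ge0}:\sum_i\lambda_i=1\}$; $B_r(c)$ denotes the Euclidean ball of radius $r$ centered at $c$. *)

theory Defs
  imports "HOL-Analysis.Analysis"
begin

text \<open>Probability simplex on the index set {1..m}: weights indexed by 1..m,
  nonnegative, summing to 1 (values outside {1..m} are irrelevant).\<close>
definition std_simplex :: "nat \<Rightarrow> (nat \<Rightarrow> real) set" where
  "std_simplex m = {l. (\<forall>i\<in>{1..m}. 0 \<le> l i) \<and> (\<Sum>i=1..m. l i) = 1}"

definition int_point :: "real^'n \<Rightarrow> bool" where
  "int_point x \<longleftrightarrow> (\<forall>k. x $ k \<in> \<int>)"

end

theory Submission imports Defs begin

lemma hull_rep:
  fixes v :: "nat \<Rightarrow> 'a::real_vector"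
  assumes "inj_on v I" "finite I" "y \<in> convex hull (v`I)"
  shows "\<exists>\<mu>. (\<forall>i\<in>I. 0 \<le> \<mu> i) \<and> sum \<mu> I = 1 \<and> (\<Sum>i\<in>I. \<mu> i *\<^sub>R v i) = y"
proof -
  from assms(3) obtain u where u: "\<forall>x\<in>v`I. 0 \<le> u x" "sum u (v`I) = 1" "(\<Sum>x\<in>v`I. u x *\<^sub>R x) = y"
    using convex_hull_finite[of "v`I"] assms(2) by auto
  show ?thesis
    apply (rule exI[of _ "u \<circ> v"])
    using u assms(1) by (simp add: sum.reindex)
qed

lemma uniq_from_ball:
  fixes v :: "nat \<Rightarrow> real^'n"
  assumes "ball 0 R \<subseteq> convex hull (v ` {1..CARD('n)+1})" "R > 0"
  shows "inj_on v {1..CARD('n)+1}"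
    "\<And>c. sum c {1..CARD('n)+1} = 0 \<Longrightarrow> (\<Sum>i\<in>{1..CARD('n)+1}. c i *\<^sub>R v i) = 0 \<Longrightarrow> \<forall>i\<in>{1..CARD('n)+1}. c i = 0"
proof -
  let ?I = "{1..CARD('n)+1}"
  have "aff_dim (ball (0::real^'n) R) = int CARD('n)"
    using aff_dim_open[of "ball (0::real^'n) R"] assms(2) by simp
  then have A: "int CARD('n) \<le> aff_dim (v`?I)"
    using aff_dim_subset[OF assms(1)] aff_dim_convex_hull by metis
  have B: "aff_dim (v`?I) \<le> int (card (v`?I)) - 1" by (rule aff_dim_le_card) simp
  have C: "card (v`?I) \<le> CARD('n)+1" using card_image_le[of ?I v] by simp
  have D: "card (v`?I) = CARD('n)+1" using A B C by linarith
  then show inj: "inj_on v ?I" by (intro eq_card_imp_inj_on) auto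
  have ind: "\<not> affine_dependent (v`?I)"
    using affine_independent_iff_card[of "v`?I"] A B D by auto
  fix c assume c: "sum c ?I = 0" "(\<Sum>i\<in>?I. c i *\<^sub>R v i) = 0"
  show "\<forall>i\<in>?I. c i = 0"
  proof (rule ccontr)
    assume "\<not> ?thesis"
    then obtain i where i: "i \<in> ?I" "c i \<noteq> 0" by auto
    let ?U = "c \<circ> inv_into ?I v"
    have "sum ?U (v`?I) = sum c ?I" using inj by (simp add: sum.reindex)
    moreover have "(\<Sum>x\<in>v`?I. ?U x *\<^sub>R x) = (\<Sum>i\<in>?I. c i *\<^sub>R v i)" using inj by (simp add: sum.reindex)
    moreover have "?U (v i) \<noteq> 0" using i inj by simp
    ultimately have "affine_dependent (v`?I)"
      unfolding affine_dependent_explicit_finite[of "v`?I", OF finite_imageI[OF finite_atLeastAtMost]]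
      using c i by (intro exI[of _ ?U]) (auto simp del: comp_apply)
    with ind show False by simp
  qed
qed

lemma eta_exists:
  fixes v :: "nat \<Rightarrow> 'a::real_normed_vector"
  assumes fin: "finite I" and inj: "inj_on v I"
    and uniq: "\<And>c. sum c I = 0 \<Longrightarrow> (\<Sum>i\<in>I. c i *\<^sub>R v i) = 0 \<Longrightarrow> \<forall>i\<in>I. c i = 0"
    and cb: "cball 0 R \<subseteq> convex hull (v`I)" and R: "R > 0"
    and lam: "\<forall>i\<in>I. 0 \<le> lam i" "sum lam I = 1" "(\<Sum>i\<in>I. lam i *\<^sub>R v i) = 0"
  shows "\<exists>\<eta>. (\<forall>w. sum (\<eta> w) I = 0 \<and> (\<Sum>i\<in>I. \<eta> w i *\<^sub>R v i) = w) \<and>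
             (\<forall>w. \<forall>i\<in>I. \<bar>\<eta> w i\<bar> \<le> lam i * norm w / R) \<and>
             (\<forall>i\<in>I. continuous_on UNIV (\<lambda>w. \<eta> w i))"
proof -
  have ex: "\<exists>\<eta>. sum \<eta> I = 0 \<and> (\<Sum>i\<in>I. \<eta> i *\<^sub>R v i) = w \<and> (\<forall>i\<in>I. \<bar>\<eta> i\<bar> \<le> lam i * norm w / R)" for w
  proof (cases "w = 0")
    case True then show ?thesis by (intro exI[of _ "\<lambda>_. 0"]) simp
  next
    case False
    define s where "s = norm w / R"
    have s: "s > 0" using False R by (simp add: s_def)
    define p where "p = (1/s) *\<^sub>R w"
    have np: "norm p = R" using s R False by (simp add: p_def s_def)
    have "p \<in> convex hull (v`I)" "-p \<in> convex hull (v`I)" using cb np by auto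
    then obtain \<mu> \<nu> where mu: "\<forall>i\<in>I. 0 \<le> \<mu> i" "sum \<mu> I = 1" "(\<Sum>i\<in>I. \<mu> i *\<^sub>R v i) = p"
      and nu: "\<forall>i\<in>I. 0 \<le> \<nu> i" "sum \<nu> I = 1" "(\<Sum>i\<in>I. \<nu> i *\<^sub>R v i) = -p"
      using hull_rep[OF inj fin] by metis
    have "\<forall>i\<in>I. (\<lambda>i. (\<mu> i + \<nu> i)/2 - lam i) i = 0"
    proof (rule uniq)
      show "(\<Sum>i\<in>I. (\<mu> i + \<nu> i) / 2 - lam i) = 0"
        using mu nu lam by (simp add: sum_subtractf sum.distrib sum_divide_distrib[symmetric])
      have "(\<Sum>i\<in>I. ((\<mu> i + \<nu> i) / 2 - lam i) *\<^sub>R v i)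
          = (1/2) *\<^sub>R (\<Sum>i\<in>I. \<mu> i *\<^sub>R v i) + (1/2) *\<^sub>R (\<Sum>i\<in>I. \<nu> i *\<^sub>R v i) - (\<Sum>i\<in>I. lam i *\<^sub>R v i)"
        unfolding scaleR_sum_right sum.distrib[symmetric] sum_subtractf[symmetric]
        by (rule sum.cong) (simp_all add: add_divide_distrib scaleR_left_distrib scaleR_diff_left)
      then show "(\<Sum>i\<in>I. ((\<mu> i + \<nu> i) / 2 - lam i) *\<^sub>R v i) = 0" using mu nu lam by simp
    qed
    then have mn: "\<forall>i\<in>I. \<mu> i + \<nu> i = 2 * lam i" by auto
    show ?thesis
    proof (intro exI[of _ "\<lambda>i. (s/2) * (\<mu> i - \<nu> i)"] conjI ballI)
      show "(\<Sum>i\<in>I. s / 2 * (\<mu> i - \<nu> i)) = 0"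
        unfolding sum_distrib_left[symmetric] sum_subtractf using mu nu by simp
      have "(\<Sum>i\<in>I. (s / 2 * (\<mu> i - \<nu> i)) *\<^sub>R v i) = (s/2) *\<^sub>R ((\<Sum>i\<in>I. \<mu> i *\<^sub>R v i) - (\<Sum>i\<in>I. \<nu> i *\<^sub>R v i))"
        unfolding scaleR_sum_right sum_subtractf[symmetric] scaleR_diff_right
        by (rule sum.cong) (simp_all add: scaleR_diff_left[symmetric] right_diff_distrib diff_divide_distrib)
      also have "\<dots> = s *\<^sub>R p" using mu nu by (simp add: scaleR_2[symmetric])
      also have "\<dots> = w" using s by (simp add: p_def)
      finally show "(\<Sum>i\<in>I. (s / 2 * (\<mu> i - \<nu> i)) *\<^sub>R v i) = w" .
      fix i assume i: "i \<in> I"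
      have "0 \<le> \<mu> i" "0 \<le> \<nu> i" using mu(1) nu(1) i by auto
      then have "\<bar>\<mu> i - \<nu> i\<bar> \<le> \<mu> i + \<nu> i" by linarith
      then have "\<bar>s / 2 * (\<mu> i - \<nu> i)\<bar> \<le> s/2 * (2 * lam i)"
        using s mn i by (simp add: abs_mult)
      then show "\<bar>s / 2 * (\<mu> i - \<nu> i)\<bar> \<le> lam i * norm w / R" by (simp add: s_def mult.commute)
    qed
  qed
  define \<eta> where "\<eta> w = (SOME \<eta>. sum \<eta> I = 0 \<and> (\<Sum>i\<in>I. \<eta> i *\<^sub>R v i) = w \<and> (\<forall>i\<in>I. \<bar>\<eta> i\<bar> \<le> lam i * norm w / R))" for w
  have P: "sum (\<eta> w) I = 0 \<and> (\<Sum>i\<in>I. \<eta> w i *\<^sub>R v i) = w \<and> (\<forall>i\<in>I. \<bar>\<eta> w i\<bar> \<le> lam i * norm w / R)" for w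
    unfolding \<eta>_def by (rule someI_ex[OF ex])
  have diff: "\<eta> x i - \<eta> y i = \<eta> (x - y) i" if i: "i \<in> I" for x y i
  proof -
    have "\<forall>i\<in>I. (\<lambda>i. \<eta> x i - \<eta> y i - \<eta> (x - y) i) i = 0"
    proof (rule uniq)
      show "(\<Sum>i\<in>I. \<eta> x i - \<eta> y i - \<eta> (x - y) i) = 0" using P by (simp add: sum_subtractf)
      have "(\<Sum>i\<in>I. (\<eta> x i - \<eta> y i - \<eta> (x - y) i) *\<^sub>R v i) =
            (\<Sum>i\<in>I. \<eta> x i *\<^sub>R v i) - (\<Sum>i\<in>I. \<eta> y i *\<^sub>R v i) - (\<Sum>i\<in>I. \<eta> (x-y) i *\<^sub>R v i)"
        by (simp add: sum_subtractf[symmetric] algebra_simps)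
      then show "(\<Sum>i\<in>I. (\<eta> x i - \<eta> y i - \<eta> (x - y) i) *\<^sub>R v i) = 0" using P by simp
    qed
    then show ?thesis using i by auto
  qed
  have cont: "continuous_on UNIV (\<lambda>w. \<eta> w i)" if i: "i \<in> I" for i
  proof (rule lipschitz_on_continuous_on[of "lam i / R"], rule lipschitz_onI)
    fix x y :: 'a
    have "dist (\<eta> x i) (\<eta> y i) = \<bar>\<eta> (x - y) i\<bar>" using diff[OF i] by (simp add: dist_real_def)
    also have "\<dots> \<le> lam i * norm (x - y) / R" using P i by blast
    finally show "dist (\<eta> x i) (\<eta> y i) \<le> lam i / R * dist x y" by (simp add: dist_norm)
  next
    show "0 \<le> lam i / R" using lam i R by simp
  qed
  show ?thesis using P cont by blast
qed

lemma expand_sum: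
  fixes x y :: "nat \<Rightarrow> 'a::real_vector"
  shows "(\<Sum>j\<in>I. (a j + b j) *\<^sub>R (t *\<^sub>R x j + y j)) = t *\<^sub>R (\<Sum>j\<in>I. a j *\<^sub>R x j) + t *\<^sub>R (\<Sum>j\<in>I. b j *\<^sub>R x j) + (\<Sum>j\<in>I. a j *\<^sub>R y j) + (\<Sum>j\<in>I. b j *\<^sub>R y j)"
  by (simp add: scaleR_sum_right sum.distrib[symmetric] algebra_simps)

lemma norm_sum_le_w:
  fixes e :: "nat \<Rightarrow> 'a::real_normed_vector"
  assumes "finite I" "\<And>j. j \<in> I \<Longrightarrow> \<bar>a j\<bar> \<le> b j" "\<And>j. j \<in> I \<Longrightarrow> norm (e j) \<le> M" "M \<ge> 0"
  shows "norm (\<Sum>j\<in>I. a j *\<^sub>R e j) \<le> (\<Sum>j\<in>I. b j) * M"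
proof -
  have "norm (\<Sum>j\<in>I. a j *\<^sub>R e j) \<le> (\<Sum>j\<in>I. norm (a j *\<^sub>R e j))" by (rule norm_sum)
  also have "\<dots> \<le> (\<Sum>j\<in>I. b j * M)"
    by (rule sum_mono) (simp add: assms mult_mono')
  finally show ?thesis by (simp add: sum_distrib_right)
qed

theorem mainTheorem6:
  fixes v :: "nat \<Rightarrow> real^'n"
  assumes "ball 0 (4 * real CARD('n) ^ 8) \<subseteq> convex hull (v ` {1..CARD('n)+1})"
  shows "\<exists>g :: nat \<Rightarrow> real^'n.
    (\<forall>i\<in>{1..CARD('n)+1}. int_point (g i) \<and>
        g i \<in> (\<lambda>p. (2 / real CARD('n) ^ 2) *\<^sub>R p) ` (convex hull (v ` {1..CARD('n)+1}))) \<and>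
    (\<forall>l\<in>std_simplex (CARD('n)+1). (\<Sum>i=1..CARD('n)+1. l i *\<^sub>R v i) = 0 \<longrightarrow>
        (\<exists>l'\<in>std_simplex (CARD('n)+1). (\<Sum>i=1..CARD('n)+1. l' i *\<^sub>R g i) = 0 \<and>
           (\<forall>i\<in>{1..CARD('n)+1}. l' i / 2 \<le> l i \<and> l i \<le> 2 * l' i))) \<and>
    (\<forall>i\<in>{1..CARD('n)+1}. \<exists>\<mu>\<in>std_simplex (CARD('n)+1).
        \<mu> i \<ge> 1 / (2 * real CARD('n) ^ 2) \<and>
        g i = \<mu> i *\<^sub>R v i + (\<Sum>j\<in>{1..CARD('n)+1} - {i}. \<mu> j *\<^sub>R g j))"
proof -
  let ?d = "CARD('n)"
  let ?I = "{1..CARD('n)+1}"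
  let ?P = "convex hull (v ` ?I)"
  define R where "R = 4 * real ?d ^ 8"
  define t where "t = 1 / (2 * real ?d ^ 2)"
  have d1: "real ?d \<ge> 1" by simp
  have R0: "R > 0" by (simp add: R_def)
  have t0: "t > 0" by (simp add: t_def)
  have t2: "t \<le> 1/2"
  proof -
    have "real ?d ^ 2 \<ge> 1" using d1 by simp
    then show ?thesis by (simp add: t_def field_simps)
  qed
  have fin: "finite ?I" by simp
  have ballP: "ball 0 R \<subseteq> ?P" using assms by (simp add: R_def)
  have cballP: "cball 0 R \<subseteq> ?P"
  proof -
    have "closed ?P" by (simp add: compact_imp_closed finite_imp_compact_convex_hull)
    then have "closure (ball 0 R) \<subseteq> ?P" using ballP closure_minimal by blast
    then show ?thesis using R0 by simp
  qed
  have inj: "inj_on v ?I" and uniq: "\<And>c. sum c ?I = 0 \<Longrightarrow> (\<Sum>i\<in>?I. c i *\<^sub>R v i) = 0 \<Longrightarrow> \<forall>i\<in>?I. c i = 0"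
    using uniq_from_ball[OF ballP R0] by blast+
  have "0 \<in> ?P" using ballP R0 by auto
  then obtain lam where lam: "\<forall>i\<in>?I. 0 \<le> lam i" "sum lam ?I = 1" "(\<Sum>i\<in>?I. lam i *\<^sub>R v i) = 0"
    using hull_rep[OF inj fin] by metis
  obtain \<eta> where eta1: "\<And>w. sum (\<eta> w) ?I = 0" "\<And>w. (\<Sum>i\<in>?I. \<eta> w i *\<^sub>R v i) = w"
    and eta2: "\<And>w i. i \<in> ?I \<Longrightarrow> \<bar>\<eta> w i\<bar> \<le> lam i * norm w / R"
    and eta3: "\<And>i. i \<in> ?I \<Longrightarrow> continuous_on UNIV (\<lambda>w. \<eta> w i)"
    using eta_exists[OF fin inj uniq cballP R0 lam] by blast
  define g :: "nat \<Rightarrow> real^'n" where "g i = (\<chi> k. of_int \<lfloor>t * v i $ k + 1/2\<rfloor>)" for i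
  define e where "e i = g i - t *\<^sub>R v i" for i
  have ge: "g i = t *\<^sub>R v i + e i" for i by (simp add: e_def)
  have eb: "norm (e i) \<le> real ?d / 2" for i
  proof -
    have "\<bar>e i $ k\<bar> \<le> 1/2" for k
    proof -
      have "e i $ k = of_int \<lfloor>t * v i $ k + 1/2\<rfloor> - t * v i $ k" by (simp add: e_def g_def)
      moreover have "of_int \<lfloor>t * v i $ k + 1/2\<rfloor> \<le> t * v i $ k + 1/2"
        "t * v i $ k + 1/2 < of_int \<lfloor>t * v i $ k + 1/2\<rfloor> + 1" by linarith+
      ultimately show ?thesis by linarith
    qed
    then have "(\<Sum>k\<in>UNIV. \<bar>e i $ k\<bar>) \<le> of_nat (card (UNIV::'n set)) * (1/2)"
      by (intro sum_bounded_above) auto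
    then show ?thesis using norm_le_l1_cart[of "e i"] by simp
  qed
  have ebig: "real ?d \<le> R"
  proof -
    have "real ?d \<le> real ?d ^ 8" using power_increasing[of 1 8 "real ?d"] d1 by simp
    then show ?thesis unfolding R_def by linarith
  qed
  have A: "\<forall>i\<in>?I. int_point (g i) \<and> g i \<in> (\<lambda>p. (2 / real ?d ^ 2) *\<^sub>R p) ` ?P"
  proof
    fix i assume i: "i \<in> ?I"
    have "int_point (g i)" by (simp add: int_point_def g_def)
    moreover have "g i \<in> (\<lambda>p. (2 / real ?d ^ 2) *\<^sub>R p) ` ?P"
    proof
      define q where "q = (1/(3*t)) *\<^sub>R e i"
      have "norm q = norm (e i) / (3 * t)" using t0 by (simp add: q_def)
      also have "\<dots> \<le> (real ?d / 2) / (3 * t)" using t0 by (intro divide_right_mono[OF eb]) simp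
      also have "\<dots> = real ?d ^ 3 / 3" by (simp add: t_def field_simps power2_eq_square power3_eq_cube)
      also have "\<dots> < R"
      proof -
        have "real ?d ^ 3 \<le> real ?d ^ 8" using d1 by (intro power_increasing) auto
        moreover have "real ?d ^ 8 > 0" using d1 by simp
        ultimately show ?thesis unfolding R_def by linarith
      qed
      finally have "q \<in> ?P" using ballP by auto
      moreover have "v i \<in> ?P" using i by (simp add: hull_inc)
      ultimately show "(1/4) *\<^sub>R v i + (3/4) *\<^sub>R q \<in> ?P"
        by (intro convexD[OF convex_convex_hull]) auto
      show "g i = (2 / real ?d ^ 2) *\<^sub>R ((1/4) *\<^sub>R v i + (3/4) *\<^sub>R q)"
        using t0 by (simp add: ge q_def scaleR_add_right t_def)
    qed
    ultimately show "int_point (g i) \<and> g i \<in> (\<lambda>p. (2 / real ?d ^ 2) *\<^sub>R p) ` ?P" by blast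
  qed
  have etac: "\<And>j S. j \<in> ?I \<Longrightarrow> continuous_on S (\<lambda>w. \<eta> w j)"
    using eta3 continuous_on_subset by blast
  have dpos8: "real ?d ^ 8 > 0" "real ?d ^ 3 \<le> real ?d ^ 8" using d1 by (auto intro: power_increasing)
  have sumlam_w: "(\<Sum>j\<in>?I. lam j * norm w / R) = norm w / R" for w
    using lam(2) by (simp add: sum_divide_distrib[symmetric] sum_distrib_right[symmetric])
  have B: "\<forall>l\<in>std_simplex (?d+1). (\<Sum>i=1..?d+1. l i *\<^sub>R v i) = 0 \<longrightarrow>
        (\<exists>l'\<in>std_simplex (?d+1). (\<Sum>i=1..?d+1. l' i *\<^sub>R g i) = 0 \<and>
           (\<forall>i\<in>?I. l' i / 2 \<le> l i \<and> l i \<le> 2 * l' i))"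
  proof (intro ballI impI)
    fix l assume l: "l \<in> std_simplex (?d+1)" "(\<Sum>i=1..?d+1. l i *\<^sub>R v i) = 0"
    have "\<forall>i\<in>?I. (\<lambda>i. l i - lam i) i = 0"
    proof (rule uniq)
      show "(\<Sum>i\<in>?I. l i - lam i) = 0" using l lam by (simp add: sum_subtractf std_simplex_def)
      show "(\<Sum>i\<in>?I. (l i - lam i) *\<^sub>R v i) = 0" using l lam by (simp add: scaleR_diff_left sum_subtractf)
    qed
    then have leq: "\<forall>i\<in>?I. l i = lam i" by auto
    define E where "E = (\<Sum>j\<in>?I. lam j *\<^sub>R e j)"
    define T where "T w = -((1/t) *\<^sub>R (E + (\<Sum>j\<in>?I. \<eta> w j *\<^sub>R e j)))" for w
    have contT: "continuous_on (cball 0 (R/2)) T"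
      unfolding T_def by (auto intro!: continuous_intros etac)
    have Tmap: "T \<in> cball 0 (R/2) \<rightarrow> cball 0 (R/2)"
    proof
      fix w :: "real^'n" assume w: "w \<in> cball 0 (R/2)"
      have nE: "norm E \<le> (\<Sum>j\<in>?I. lam j) * (real ?d/2)" unfolding E_def
        using lam(1) eb by (intro norm_sum_le_w) auto
      have nS: "norm (\<Sum>j\<in>?I. \<eta> w j *\<^sub>R e j) \<le> (\<Sum>j\<in>?I. lam j * norm w / R) * (real ?d/2)"
        using eta2 eb by (intro norm_sum_le_w) auto
      have "norm w / R \<le> 1/2" using w R0 by (simp add: field_simps)
      then have "(norm w / R) * (real ?d/2) \<le> (1/2) * (real ?d/2)"
        using d1 by (intro mult_right_mono) auto
      then have nS': "norm (\<Sum>j\<in>?I. \<eta> w j *\<^sub>R e j) \<le> (1/2) * (real ?d/2)"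
        using nS[unfolded sumlam_w] by (meson order_trans)
      have nE': "norm E \<le> real ?d/2" using nE lam(2) by simp
      have "norm (E + (\<Sum>j\<in>?I. \<eta> w j *\<^sub>R e j)) \<le> real ?d/2 + (1/2) * (real ?d/2)"
        using nE' nS' norm_triangle_ineq[of E "\<Sum>j\<in>?I. \<eta> w j *\<^sub>R e j"] by linarith
      then have X: "norm (E + (\<Sum>j\<in>?I. \<eta> w j *\<^sub>R e j)) \<le> 3/4 * real ?d" by simp
      have "norm (T w) = (1/t) * norm (E + (\<Sum>j\<in>?I. \<eta> w j *\<^sub>R e j))"
        using t0 unfolding T_def norm_minus_cancel norm_scaleR by simp
      also have "\<dots> \<le> (1/t) * (3/4 * real ?d)" using t0 X by (intro mult_left_mono) auto
      finally have "norm (T w) \<le> (1/t) * (3/4 * real ?d)" .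
      also have "\<dots> = 3/2 * real ?d ^ 3" by (simp add: t_def power2_eq_square power3_eq_cube)
      also have "\<dots> \<le> R/2" using dpos8 unfolding R_def by linarith
      finally show "T w \<in> cball 0 (R/2)" by simp
    qed
    obtain w where w: "w \<in> cball 0 (R/2)" "T w = w"
      using brouwer_ball[OF _ contT Tmap] R0 by auto
    have tw: "t *\<^sub>R w = -(E + (\<Sum>j\<in>?I. \<eta> w j *\<^sub>R e j))"
    proof -
      have "t *\<^sub>R w = t *\<^sub>R T w" using w(2) by simp
      also have "\<dots> = -(E + (\<Sum>j\<in>?I. \<eta> w j *\<^sub>R e j))" using t0 by (simp add: T_def)
      finally show ?thesis .
    qed
    have small: "\<bar>\<eta> w j\<bar> \<le> lam j / 2" if j: "j \<in> ?I" for j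
    proof -
      have "lam j * norm w \<le> lam j * (R/2)" using w lam(1) j by (intro mult_left_mono) auto
      then have "lam j * norm w / R \<le> lam j / 2" using R0 by (simp add: field_simps)
      then show ?thesis using eta2[OF j, of w] by linarith
    qed
    define l' where "l' j = lam j + \<eta> w j" for j
    show "\<exists>l'\<in>std_simplex (?d+1). (\<Sum>i=1..?d+1. l' i *\<^sub>R g i) = 0 \<and>
           (\<forall>i\<in>?I. l' i / 2 \<le> l i \<and> l i \<le> 2 * l' i)"
    proof (intro bexI[of _ l'] conjI ballI)
      show "l' \<in> std_simplex (?d+1)" unfolding std_simplex_def
      proof (intro CollectI conjI ballI)
        fix j assume j: "j \<in> {1..?d+1}"
        show "0 \<le> l' j" using small[OF j] lam(1) j unfolding l'_def by fastforce
      next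
        show "(\<Sum>j=1..?d+1. l' j) = 1" unfolding l'_def using lam(2) eta1(1)[of w] by (simp add: sum.distrib)
      qed
      show "(\<Sum>i=1..?d+1. l' i *\<^sub>R g i) = 0"
        unfolding l'_def ge expand_sum using lam(3) eta1(2)[of w] tw by (simp add: E_def)
      fix j assume j: "j \<in> ?I"
      show "l' j / 2 \<le> l j" "l j \<le> 2 * l' j" using small[OF j] leq j lam(1) unfolding l'_def by auto
    qed
  qed
  have C: "\<forall>i\<in>?I. \<exists>\<mu>\<in>std_simplex (?d+1). \<mu> i \<ge> 1 / (2 * real ?d ^ 2) \<and>
        g i = \<mu> i *\<^sub>R v i + (\<Sum>j\<in>?I - {i}. \<mu> j *\<^sub>R g j)"
  proof
    fix i assume i: "i \<in> ?I"
    define c where "c w j = lam j + \<eta> w j" for w j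
    have csum: "sum (c w) ?I = 1" for w unfolding c_def using lam(2) eta1(1)[of w] by (simp add: sum.distrib)
    have cv: "(\<Sum>j\<in>?I. c w j *\<^sub>R v j) = w" for w
      unfolding c_def scaleR_add_left sum.distrib using lam(3) eta1(2)[of w] by simp
    have cpos: "0 \<le> c w j" if "norm w \<le> R" "j \<in> ?I" for w j
    proof -
      have "lam j * norm w \<le> lam j * R" using that lam(1) by (intro mult_left_mono) auto
      then have "lam j * norm w / R \<le> lam j" using R0 by (simp add: field_simps)
      then show ?thesis using eta2[OF that(2), of w] unfolding c_def by linarith
    qed
    have crest: "(\<Sum>j\<in>?I-{i}. c w j) = 1 - c w i" for w
      using sum.remove[OF fin i, of "c w"] csum[of w] by simp
    have cle1: "c w i \<le> 1" if "norm w \<le> R" for w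
    proof -
      have "0 \<le> (\<Sum>j\<in>?I-{i}. c w j)" using cpos[OF that] by (intro sum_nonneg) auto
      then show ?thesis using crest[of w] by simp
    qed
    define T where "T w = (1/t) *\<^sub>R (((1 - (1-t) * c w i)/(1-t)) *\<^sub>R e i - (\<Sum>j\<in>?I-{i}. c w j *\<^sub>R e j))" for w
    have contT: "continuous_on (cball 0 R) T"
      unfolding T_def c_def using i t2 by (auto intro!: continuous_intros etac)
    have Tmap: "T \<in> cball 0 R \<rightarrow> cball 0 R"
    proof
      fix w :: "real^'n" assume w: "w \<in> cball 0 R"
      then have nw: "norm w \<le> R" by simp
      define k where "k = (1 - (1-t) * c w i)/(1-t)"
      have k0: "0 \<le> k" "k \<le> 2"
      proof -
        have "(1-t) * c w i \<le> (1-t) * 1" using cle1[OF nw] t2 by (intro mult_left_mono) auto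
        moreover have "0 \<le> (1-t) * c w i" using cpos[OF nw i] t2 by simp
        moreover have "(1-t) * 1 \<le> 1" using t0 by simp
        ultimately have "0 \<le> 1 - (1-t) * c w i" "1 - (1-t) * c w i \<le> 1" by linarith+
        moreover have "1 - t \<ge> 1/2" using t2 by simp
        ultimately show "0 \<le> k" "k \<le> 2" unfolding k_def by (auto simp: field_simps)
      qed
      have n1: "norm (k *\<^sub>R e i) \<le> 2 * (real ?d / 2)"
      proof -
        have "\<bar>k\<bar> * norm (e i) \<le> 2 * (real ?d / 2)" using k0 eb[of i] by (intro mult_mono') auto
        then show ?thesis by simp
      qed
      have "norm (\<Sum>j\<in>?I-{i}. c w j *\<^sub>R e j) \<le> (\<Sum>j\<in>?I-{i}. c w j) * (real ?d / 2)"
        using cpos[OF nw] eb by (intro norm_sum_le_w) auto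
      also have "\<dots> \<le> 1 * (real ?d / 2)" using crest[of w] cpos[OF nw i] by (intro mult_right_mono) auto
      finally have n2: "norm (\<Sum>j\<in>?I-{i}. c w j *\<^sub>R e j) \<le> real ?d / 2" by simp
      have X: "norm (k *\<^sub>R e i - (\<Sum>j\<in>?I-{i}. c w j *\<^sub>R e j)) \<le> 3/2 * real ?d"
        using norm_triangle_ineq4[of "k *\<^sub>R e i" "\<Sum>j\<in>?I-{i}. c w j *\<^sub>R e j"] n1 n2 by linarith
      have "norm (T w) = (1/t) * norm (k *\<^sub>R e i - (\<Sum>j\<in>?I-{i}. c w j *\<^sub>R e j))"
        using t0 unfolding T_def k_def[symmetric] norm_scaleR by simp
      also have "\<dots> \<le> (1/t) * (3/2 * real ?d)" using t0 X by (intro mult_left_mono) auto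
      also have "\<dots> = 3 * real ?d ^ 3" by (simp add: t_def power2_eq_square power3_eq_cube)
      also have "\<dots> \<le> R" using dpos8 unfolding R_def by linarith
      finally show "T w \<in> cball 0 R" by simp
    qed
    obtain w where w: "w \<in> cball 0 R" "T w = w"
      using brouwer_ball[OF _ contT Tmap] R0 by auto
    then have nw: "norm w \<le> R" by simp
    define k where "k = (1 - (1-t) * c w i)/(1-t)"
    define \<beta> where "\<beta> = (1-t) / (1 - (1-t) * c w i)"
    define S2 where "S2 = (\<Sum>j\<in>?I-{i}. c w j *\<^sub>R e j)"
    have den: "1 - (1-t) * c w i \<ge> t"
    proof -
      have "(1-t) * c w i \<le> (1-t) * 1" using cle1[OF nw] t2 by (intro mult_left_mono) auto
      then show ?thesis by simp
    qed
    have b0: "\<beta> > 0" unfolding \<beta>_def using den t0 t2 by simp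
    have D1: "1 - (1-t) * c w i \<noteq> 0" "1 - t \<noteq> 0" using den t0 t2 by auto
    have bk: "\<beta> * k = 1" unfolding \<beta>_def k_def using D1 by simp
    have tw: "t *\<^sub>R w = k *\<^sub>R e i - S2"
    proof -
      have "t *\<^sub>R w = t *\<^sub>R T w" using w(2) by simp
      also have "\<dots> = k *\<^sub>R e i - S2" using t0 by (simp add: T_def k_def S2_def)
      finally show ?thesis .
    qed
    define \<mu> where "\<mu> j = (if j = i then t + \<beta> * t * c w i else \<beta> * c w j)" for j
    have S1: "(\<Sum>j\<in>?I-{i}. c w j *\<^sub>R v j) = w - c w i *\<^sub>R v i"
      using sum.remove[OF fin i, of "\<lambda>j. c w j *\<^sub>R v j"] cv[of w] by (simp add: algebra_simps)
    have rest: "(\<Sum>j\<in>?I-{i}. \<mu> j *\<^sub>R g j) = (\<beta> * t) *\<^sub>R (\<Sum>j\<in>?I-{i}. c w j *\<^sub>R v j) + \<beta> *\<^sub>R S2"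
    proof -
      have "(\<Sum>j\<in>?I-{i}. \<mu> j *\<^sub>R g j) = (\<Sum>j\<in>?I-{i}. (\<beta> * t) *\<^sub>R (c w j *\<^sub>R v j) + \<beta> *\<^sub>R (c w j *\<^sub>R e j))"
        by (rule sum.cong) (auto simp: \<mu>_def ge scaleR_add_right)
      also have "\<dots> = (\<beta> * t) *\<^sub>R (\<Sum>j\<in>?I-{i}. c w j *\<^sub>R v j) + \<beta> *\<^sub>R S2"
        by (simp add: sum.distrib scaleR_sum_right S2_def)
      finally show ?thesis .
    qed
    show "\<exists>\<mu>\<in>std_simplex (?d+1). \<mu> i \<ge> 1 / (2 * real ?d ^ 2) \<and>
        g i = \<mu> i *\<^sub>R v i + (\<Sum>j\<in>?I - {i}. \<mu> j *\<^sub>R g j)"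
    proof (intro bexI[of _ \<mu>] conjI)
      have mi: "\<mu> i = t + \<beta> * t * c w i" by (simp add: \<mu>_def)
      have "0 \<le> \<beta> * t * c w i" using b0 t0 cpos[OF nw i] by simp
      then show "\<mu> i \<ge> 1 / (2 * real ?d ^ 2)" using mi by (simp add: t_def)
      have "\<mu> i *\<^sub>R v i + (\<Sum>j\<in>?I - {i}. \<mu> j *\<^sub>R g j)
          = t *\<^sub>R v i + \<beta> *\<^sub>R (t *\<^sub>R w) + \<beta> *\<^sub>R S2"
        unfolding rest S1 mi by (simp add: algebra_simps)
      also have "\<dots> = t *\<^sub>R v i + (\<beta> * k) *\<^sub>R e i" unfolding tw by (simp add: algebra_simps)
      also have "\<dots> = g i" using bk by (simp add: ge)
      finally show "g i = \<mu> i *\<^sub>R v i + (\<Sum>j\<in>?I - {i}. \<mu> j *\<^sub>R g j)" by simp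
      show "\<mu> \<in> std_simplex (?d+1)" unfolding std_simplex_def
      proof (intro CollectI conjI ballI)
        fix j assume j: "j \<in> {1..?d+1}"
        show "0 \<le> \<mu> j" using b0 t0 cpos[OF nw j] cpos[OF nw i] by (simp add: \<mu>_def)
      next
        have "(\<Sum>j\<in>?I-{i}. \<mu> j) = \<beta> * (\<Sum>j\<in>?I-{i}. c w j)"
          by (simp add: \<mu>_def sum_distrib_left)
        then have "(\<Sum>j\<in>?I. \<mu> j) = t + \<beta> * t * c w i + \<beta> * (1 - c w i)"
          using sum.remove[OF fin i, of \<mu>] crest[of w] mi by simp
        also have "\<dots> = t + \<beta> * (1 - (1-t) * c w i)" by (simp add: algebra_simps)
        also have "\<dots> = 1" unfolding \<beta>_def using den t0 by simp
        finally show "(\<Sum>j=1..?d+1. \<mu> j) = 1" .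
      qed
    qed
  qed
  show ?thesis using A B C by blast
qed

end
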